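(* Let $q\ge3$ be a prime power and let $P\subseteq[0,q-2]^n$ be an integral convex polytope which contains, up to a unimodular affine transformation, either a lattice segment of length $2$ (the points $0,e_1,2e_1$ and the segment joining them) or the unit square $[0,1]^2\times\{0\}$. Set $P_0=P$ and $P_{k+1}=P_k*P_k$ for $k\ge0$, and let $\delta_k=\delta(P_k)$. Then $\delta_{k+1}=\min\{\delta_k,\ 2\delta_k-\delta_k^2\frac{q}{q-1}\}$ for all $k\ge0$, and $\delta_k=\delta_2$ for all $k\ge2$.
   Context: The join of $P\subseteq\mathbb{R}^n$ and $Q\subseteq\mathbb{R}^m$ is $P*Q=\mathrm{conv}\big(\{(p,\mathbf{0}^m,0):p\in P\}\cup\{(\mathbf{0}^n,y,1):y\in Q\}\big)\subseteq\mathbb{R}^{n+m+1}$; thus $P_k\subseteq[0,q-2]^{n_k}$ with $n_0=n$, $n_{k+1}=2n_k+1$. For an integral convex polytope $P\subseteq[0,q-2]^n$: $\mathcal{L}_P=\mathrm{span}_{\mathbb{F}_q}\{x^p: p\in P\cap\mathbb{Z}^n\}$, $N(P)=\max_{0\neq f\in\mathcal{L}_P}|Z(f)|$ with $Z(f)$ the zero set of $f$ in $(\mathbb{F}_q^\times)^n$, and $\delta(P)=\big((q-1)^n-N(P)\big)/(q-1)^n$. *)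

theory Defs
  imports Complex_Main "HOL-Library.FuncSet" "HOL-Library.Cardinality"
begin

text \<open>Points of R^n are represented as functions nat => real that vanish
  at every index >= n.\<close>

definition in_dim :: "nat \<Rightarrow> (nat \<Rightarrow> real) \<Rightarrow> bool" where
  "in_dim n x \<longleftrightarrow> (\<forall>i\<ge>n. x i = 0)"

definition conv :: "(nat \<Rightarrow> real) set \<Rightarrow> (nat \<Rightarrow> real) set" where
  "conv S = {x. \<exists>F u. finite F \<and> F \<noteq> {} \<and> F \<subseteq> S \<and> (\<forall>v\<in>F. 0 \<le> u v) \<and>
                  sum u F = 1 \<and> x = (\<lambda>i. \<Sum>v\<in>F. u v * v i)}"

definition int_point :: "nat \<Rightarrow> (nat \<Rightarrow> real) \<Rightarrow> bool" where
  "int_point n x \<longleftrightarrow> in_dim n x \<and> (\<forall>i. x i \<in> \<int>)"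

definition integral_polytope :: "nat \<Rightarrow> (nat \<Rightarrow> real) set \<Rightarrow> bool" where
  "integral_polytope n P \<longleftrightarrow>
     (\<exists>V. finite V \<and> V \<noteq> {} \<and> (\<forall>v\<in>V. int_point n v) \<and> P = conv V)"

definition in_box :: "nat \<Rightarrow> nat \<Rightarrow> (nat \<Rightarrow> real) set \<Rightarrow> bool" where
  "in_box q n P \<longleftrightarrow> (\<forall>x\<in>P. in_dim n x \<and> (\<forall>i<n. 0 \<le> x i \<and> x i \<le> real q - 2))"

definition join :: "nat \<Rightarrow> (nat \<Rightarrow> real) set \<Rightarrow> nat \<Rightarrow> (nat \<Rightarrow> real) set \<Rightarrow> (nat \<Rightarrow> real) set" where
  "join n P m Q = conv ((\<lambda>p. \<lambda>i. if i < n then p i else 0) ` P \<union>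
      (\<lambda>y. \<lambda>i. if n \<le> i \<and> i < n + m then y (i - n) else if i = n + m then 1 else 0) ` Q)"

fun dimk :: "nat \<Rightarrow> nat \<Rightarrow> nat" where
  "dimk n 0 = n"
| "dimk n (Suc k) = 2 * dimk n k + 1"

fun Pk :: "nat \<Rightarrow> (nat \<Rightarrow> real) set \<Rightarrow> nat \<Rightarrow> (nat \<Rightarrow> real) set" where
  "Pk n P 0 = P"
| "Pk n P (Suc k) = join (dimk n k) (Pk n P k) (dimk n k) (Pk n P k)"

definition unimodular :: "nat \<Rightarrow> (nat \<Rightarrow> nat \<Rightarrow> int) \<Rightarrow> bool" where
  "unimodular n A \<longleftrightarrow> (\<exists>B::nat \<Rightarrow> nat \<Rightarrow> int. \<forall>i<n. \<forall>j<n.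
      (\<Sum>l<n. A i l * B l j) = (if i = j then 1 else 0) \<and>
      (\<Sum>l<n. B i l * A l j) = (if i = j then 1 else 0))"

definition affine_map :: "nat \<Rightarrow> (nat \<Rightarrow> nat \<Rightarrow> int) \<Rightarrow> (nat \<Rightarrow> int) \<Rightarrow> (nat \<Rightarrow> real) \<Rightarrow> (nat \<Rightarrow> real)" where
  "affine_map n A b x = (\<lambda>i. if i < n then (\<Sum>j<n. real_of_int (A i j) * x j) + real_of_int (b i) else 0)"

definition unit_vec :: "nat \<Rightarrow> nat \<Rightarrow> real" where
  "unit_vec k = (\<lambda>i. if i = k then 1 else 0)"

definition contains_segment2 :: "nat \<Rightarrow> (nat \<Rightarrow> real) set \<Rightarrow> bool" where
  "contains_segment2 n P \<longleftrightarrow> 1 \<le> n \<and> (\<exists>A b. unimodular n A \<and>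
      affine_map n A b ` conv {(\<lambda>i. 0), (\<lambda>i. 2 * unit_vec 0 i)} \<subseteq> P)"

definition contains_unit_square :: "nat \<Rightarrow> (nat \<Rightarrow> real) set \<Rightarrow> bool" where
  "contains_unit_square n P \<longleftrightarrow> 2 \<le> n \<and> (\<exists>A b. unimodular n A \<and>
      affine_map n A b ` conv {(\<lambda>i. 0), unit_vec 0, unit_vec 1, (\<lambda>i. unit_vec 0 i + unit_vec 1 i)} \<subseteq> P)"

text \<open>Lattice points of P (P inside [0,q-2]^n, so all lattice points have
  nonnegative coordinates and are represented as exponent vectors nat => nat).\<close>
definition lattice_pts :: "nat \<Rightarrow> (nat \<Rightarrow> real) set \<Rightarrow> (nat \<Rightarrow> nat) set" where
  "lattice_pts n P = {p. (\<forall>i\<ge>n. p i = 0) \<and> (\<lambda>i. real (p i)) \<in> P}"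

definition eval_poly :: "nat \<Rightarrow> (nat \<Rightarrow> nat) set \<Rightarrow> ((nat \<Rightarrow> nat) \<Rightarrow> 'a::field) \<Rightarrow> (nat \<Rightarrow> 'a) \<Rightarrow> 'a" where
  "eval_poly n L c x = (\<Sum>p\<in>L. c p * (\<Prod>i<n. x i ^ p i))"

definition torus :: "nat \<Rightarrow> (nat \<Rightarrow> 'a::field) set" where
  "torus n = PiE {..<n} (\<lambda>_. UNIV - {0})"

definition zero_count :: "nat \<Rightarrow> (nat \<Rightarrow> nat) set \<Rightarrow> ((nat \<Rightarrow> nat) \<Rightarrow> 'a::{finite,field}) \<Rightarrow> nat" where
  "zero_count n L c = card {x \<in> torus n. eval_poly n L c x = 0}"

definition NP :: "'a::{finite,field} itself \<Rightarrow> nat \<Rightarrow> (nat \<Rightarrow> real) set \<Rightarrow> nat" where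
  "NP TYPE('a) n P = Max {zero_count n (lattice_pts n P) (c :: (nat \<Rightarrow> nat) \<Rightarrow> 'a) | c.
        (\<forall>p. p \<notin> lattice_pts n P \<longrightarrow> c p = 0) \<and> (\<exists>p\<in>lattice_pts n P. c p \<noteq> 0)}"

definition delta :: "'a::{finite,field} itself \<Rightarrow> nat \<Rightarrow> (nat \<Rightarrow> real) set \<Rightarrow> real" where
  "delta TYPE('a) n P = ((real (CARD('a)) - 1) ^ n - real (NP TYPE('a) n P)) / (real (CARD('a)) - 1) ^ n"

end

theory Submission
  imports Defs
begin


lemma conv_single: "v \<in> S \<Longrightarrow> v \<in> conv S"
  unfolding conv_def
  by (rule CollectI, rule exI[of _ "{v}"], rule exI[of _ "\<lambda>_. 1"]) auto

lemma conv_comb: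
  assumes F: "finite F" and g: "\<forall>v\<in>F. g v \<in> conv S" and u: "\<forall>v\<in>F. 0 \<le> u v" and s: "sum u F = 1"
  shows "(\<lambda>i. \<Sum>v\<in>F. u v * g v i) \<in> conv S"
proof -
  define Q where "Q v Gv av \<longleftrightarrow> finite Gv \<and> Gv \<noteq> {} \<and> Gv \<subseteq> S \<and> (\<forall>w\<in>Gv. 0 \<le> av w) \<and>
      sum av Gv = 1 \<and> g v = (\<lambda>i. \<Sum>w\<in>Gv. av w * w i)" for v Gv and av :: "(nat \<Rightarrow> real) \<Rightarrow> real"
  have "\<forall>v\<in>F. \<exists>Gv av. Q v Gv av" using g unfolding conv_def Q_def by blast
  then obtain G where "\<forall>v\<in>F. \<exists>av. Q v (G v) av" using bchoice[of F "\<lambda>v Gv. \<exists>av. Q v Gv av"] by blast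
  then obtain a where "\<forall>v\<in>F. Q v (G v) (a v)" using bchoice[of F "\<lambda>v av. Q v (G v) av"] by blast
  then have G: "\<forall>v\<in>F. finite (G v) \<and> G v \<noteq> {} \<and> G v \<subseteq> S \<and> (\<forall>w\<in>G v. 0 \<le> a v w) \<and>
      sum (a v) (G v) = 1 \<and> g v = (\<lambda>i. \<Sum>w\<in>G v. a v w * w i)" unfolding Q_def by blast
  define a' where "a' v w = (if w \<in> G v then a v w else 0)" for v w
  define H where "H = (\<Union>v\<in>F. G v)"
  define b where "b w = (\<Sum>v\<in>F. u v * a' v w)" for w
  have Fne: "F \<noteq> {}" using s by auto
  have Hf: "finite H" using F G unfolding H_def by auto
  have Hne: "H \<noteq> {}" using Fne G unfolding H_def by auto
  have HS: "H \<subseteq> S" using G unfolding H_def by auto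
  have GH: "\<And>v. v \<in> F \<Longrightarrow> G v \<subseteq> H" unfolding H_def by auto
  have b0: "\<forall>w\<in>H. 0 \<le> b w" unfolding b_def a'_def using u G
    by (auto intro!: sum_nonneg mult_nonneg_nonneg)
  have red: "\<And>v f. v \<in> F \<Longrightarrow> (\<Sum>w\<in>H. a' v w * f w) = (\<Sum>w\<in>G v. a v w * f w)"
  proof -
    fix v f assume v: "v \<in> F"
    have "(\<Sum>w\<in>H. a' v w * f w) = (\<Sum>w\<in>H. if w \<in> G v then a v w * f w else 0)"
      unfolding a'_def by (rule sum.cong) auto
    also have "\<dots> = (\<Sum>w\<in>H \<inter> G v. a v w * f w)" using Hf by (rule sum.inter_restrict[symmetric])
    also have "H \<inter> G v = G v" using GH[OF v] by auto
    finally show "(\<Sum>w\<in>H. a' v w * f w) = (\<Sum>w\<in>G v. a v w * f w)" .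
  qed
  have sb: "sum b H = 1"
  proof -
    have r1: "\<forall>v\<in>F. sum (a' v) H = 1"
    proof
      fix v assume v: "v \<in> F"
      have "sum (a' v) H = (\<Sum>w\<in>H. a' v w * 1)" by simp
      also have "\<dots> = (\<Sum>w\<in>G v. a v w * 1)" by (rule red[OF v])
      finally show "sum (a' v) H = 1" using G v by simp
    qed
    have "sum b H = (\<Sum>v\<in>F. u v * sum (a' v) H)"
      unfolding b_def by (simp add: sum.swap[of _ H] sum_distrib_left)
    also have "\<dots> = (\<Sum>v\<in>F. u v * 1)" by (rule sum.cong) (use r1 in auto)
    finally show ?thesis using s by simp
  qed
  have xe: "(\<lambda>i. \<Sum>v\<in>F. u v * g v i) = (\<lambda>i. \<Sum>w\<in>H. b w * w i)"
  proof
    fix i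
    have "(\<Sum>v\<in>F. u v * g v i) = (\<Sum>v\<in>F. u v * (\<Sum>w\<in>H. a' v w * w i))"
      by (rule sum.cong) (use G red in auto)
    also have "\<dots> = (\<Sum>w\<in>H. b w * w i)"
      unfolding b_def by (simp add: sum.swap[of _ F] sum_distrib_left sum_distrib_right mult.assoc)
    finally show "(\<Sum>v\<in>F. u v * g v i) = (\<Sum>w\<in>H. b w * w i)" .
  qed
  show ?thesis unfolding xe conv_def
    using Hf Hne HS b0 sb by blast
qed

lemma conv_conv: "conv (conv S) \<subseteq> conv S"
proof
  fix x assume "x \<in> conv (conv S)"
  then obtain F u where "finite F" "F \<subseteq> conv S" "\<forall>v\<in>F. 0 \<le> u v" "sum u F = 1"
     "x = (\<lambda>i. \<Sum>v\<in>F. u v * v i)" unfolding conv_def by blast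
  then show "x \<in> conv S" using conv_comb[of F "\<lambda>v. v" S u] by auto
qed

lemma conv_bounds:
  assumes "\<forall>v\<in>S. \<forall>i. lo i \<le> v i \<and> v i \<le> hi i" and "x \<in> conv S"
  shows "lo i \<le> x i \<and> x i \<le> hi i"
proof -
  from assms(2) obtain F u where F: "finite F" "F \<subseteq> S" "\<forall>v\<in>F. 0 \<le> u v" "sum u F = 1"
     "x = (\<lambda>i. \<Sum>v\<in>F. u v * v i)" unfolding conv_def by blast
  have "lo i = (\<Sum>v\<in>F. u v * lo i)" using F(4) by (simp add: sum_distrib_right[symmetric])
  also have "\<dots> \<le> x i" unfolding F(5) using F assms(1)
    by (auto intro!: sum_mono mult_left_mono)
  finally have 1: "lo i \<le> x i" .
  have "x i \<le> (\<Sum>v\<in>F. u v * hi i)" unfolding F(5) using F assms(1)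
    by (auto intro!: sum_mono mult_left_mono)
  also have "\<dots> = hi i" using F(4) by (simp add: sum_distrib_right[symmetric])
  finally show ?thesis using 1 by simp
qed

lemma finite_bounded_funs: "finite {p::nat\<Rightarrow>nat. (\<forall>i\<ge>n. p i = 0) \<and> (\<forall>i<n. p i \<le> B)}"
proof -
  have "{p::nat\<Rightarrow>nat. (\<forall>i\<ge>n. p i = 0) \<and> (\<forall>i<n. p i \<le> B)} \<subseteq>
        (\<lambda>f i. if i < n then f i else 0) ` PiE {..<n} (\<lambda>_. {..B})"
  proof
    fix p assume p: "p \<in> {p::nat\<Rightarrow>nat. (\<forall>i\<ge>n. p i = 0) \<and> (\<forall>i<n. p i \<le> B)}"
    have "p = (\<lambda>i. if i < n then restrict p {..<n} i else 0)" using p by (auto simp: fun_eq_iff)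
    moreover have "restrict p {..<n} \<in> PiE {..<n} (\<lambda>_. {..B})" using p by auto
    ultimately show "p \<in> (\<lambda>f i. if i < n then f i else 0) ` PiE {..<n} (\<lambda>_. {..B})" by blast
  qed
  then show ?thesis by (rule finite_subset) (auto intro: finite_PiE)
qed



lemma finite_torus[simp]: "finite (torus n :: (nat \<Rightarrow> 'a::{finite,field}) set)"
  unfolding torus_def by (auto intro: finite_PiE)

lemma card_torus: "card (torus n :: (nat \<Rightarrow> 'a::{finite,field}) set) = (CARD('a) - 1) ^ n"
  unfolding torus_def by (simp add: card_PiE card_Diff_singleton)

lemma torus_nz: "x \<in> torus n \<Longrightarrow> i < n \<Longrightarrow> x i \<noteq> 0"
  unfolding torus_def by auto

lemma zero_count_le: "zero_count n L (c::(nat\<Rightarrow>nat)\<Rightarrow>'a::{finite,field}) \<le> (CARD('a) - 1) ^ n"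
  unfolding zero_count_def card_torus[symmetric] by (rule card_mono) auto

lemma zero_count_zero:
  assumes "\<forall>p\<in>L. c p = 0"
  shows "zero_count n L (c::(nat\<Rightarrow>nat)\<Rightarrow>'a::{finite,field}) = (CARD('a) - 1) ^ n"
  unfolding zero_count_def card_torus[symmetric] eval_poly_def using assms by simp

lemma zero_count_cong:
  assumes "\<forall>p\<in>L. c p = d p"
  shows "zero_count n L (c::(nat\<Rightarrow>nat)\<Rightarrow>'a::{finite,field}) = zero_count n L d"
  unfolding zero_count_def eval_poly_def using assms by simp

definition NL :: "'a::{finite,field} itself \<Rightarrow> nat \<Rightarrow> (nat \<Rightarrow> nat) set \<Rightarrow> nat" where
  "NL (_::'a itself) n L = Max {zero_count n L (c :: (nat \<Rightarrow> nat) \<Rightarrow> 'a) | c.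
        (\<forall>p. p \<notin> L \<longrightarrow> c p = 0) \<and> (\<exists>p\<in>L. c p \<noteq> 0)}"

lemma NP_NL: "NP TYPE('a::{finite,field}) n P = NL TYPE('a) n (lattice_pts n P)"
  unfolding NP_def NL_def by simp

definition adm :: "(nat \<Rightarrow> nat) set \<Rightarrow> ((nat \<Rightarrow> nat) \<Rightarrow> 'a::zero) \<Rightarrow> bool" where
  "adm L c \<longleftrightarrow> (\<forall>p. p \<notin> L \<longrightarrow> c p = 0) \<and> (\<exists>p\<in>L. c p \<noteq> 0)"

lemma SS_finite: "finite {zero_count n L (c :: (nat \<Rightarrow> nat) \<Rightarrow> 'a::{finite,field}) | c. adm L c}"
proof (rule finite_subset[of _ "{..(CARD('a) - 1) ^ n}"])
  show "{zero_count n L (c :: (nat \<Rightarrow> nat) \<Rightarrow> 'a::{finite,field}) | c. adm L c} \<subseteq> {..(CARD('a) - 1) ^ n}"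
    unfolding atMost_def using zero_count_le by blast
qed auto

lemma NL_alt: "NL TYPE('a::{finite,field}) n L = Max {zero_count n L (c :: (nat \<Rightarrow> nat) \<Rightarrow> 'a) | c. adm L c}"
  unfolding NL_def adm_def by simp

lemma SS_ne: "L \<noteq> {} \<Longrightarrow> {zero_count n L (c :: (nat \<Rightarrow> nat) \<Rightarrow> 'a::{finite,field}) | c. adm L c} \<noteq> {}"
proof -
  assume "L \<noteq> {}" then obtain p0 where "p0 \<in> L" by auto
  then have "adm L (\<lambda>p. if p = p0 then (1::'a) else 0)" unfolding adm_def by auto
  then show ?thesis by blast
qed

lemma NL_ge:
  assumes "\<exists>p\<in>L. c p \<noteq> 0"
  shows "zero_count n L (c :: (nat \<Rightarrow> nat) \<Rightarrow> 'a::{finite,field}) \<le> NL TYPE('a) n L"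
proof -
  define d where "d p = (if p \<in> L then c p else 0)" for p
  have "adm L d" using assms unfolding adm_def d_def by auto
  moreover have "zero_count n L c = zero_count n L d" by (rule zero_count_cong) (simp add: d_def)
  ultimately show ?thesis unfolding NL_alt by (intro Max_ge[OF SS_finite]) blast
qed

lemma NL_attained:
  assumes "L \<noteq> {}"
  shows "\<exists>c :: (nat \<Rightarrow> nat) \<Rightarrow> 'a::{finite,field}. adm L c \<and> zero_count n L c = NL TYPE('a) n L"
proof -
  have "NL TYPE('a) n L \<in> {zero_count n L (c :: (nat \<Rightarrow> nat) \<Rightarrow> 'a) | c. adm L c}"
    unfolding NL_alt by (rule Max_in[OF SS_finite SS_ne[OF assms]])
  then show ?thesis by auto
qed

lemma NL_le: "L \<noteq> {} \<Longrightarrow> NL TYPE('a::{finite,field}) n L \<le> (CARD('a) - 1) ^ n"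
  using NL_attained[of L n, where 'a='a] zero_count_le by metis

lemma NL_eqI:
  assumes "\<And>c :: (nat \<Rightarrow> nat) \<Rightarrow> 'a::{finite,field}. adm L c \<Longrightarrow> zero_count n L c \<le> M"
    and "adm L c0" and "zero_count n L (c0 :: (nat \<Rightarrow> nat) \<Rightarrow> 'a) = M"
  shows "NL TYPE('a) n L = M"
  unfolding NL_alt
  by (rule Max_eqI[OF SS_finite]) (use assms in auto)



definition mono_ev :: "nat \<Rightarrow> (nat \<Rightarrow> nat) \<Rightarrow> (nat \<Rightarrow> 'a::field) \<Rightarrow> 'a" where
  "mono_ev n p x = (\<Prod>i<n. x i ^ p i)"

lemma mono_ev_nz: "x \<in> torus n \<Longrightarrow> mono_ev n p x \<noteq> 0"
  unfolding mono_ev_def by (auto simp: torus_nz)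

lemma eval_mono: "eval_poly n L c x = (\<Sum>p\<in>L. c p * mono_ev n p x)"
  unfolding eval_poly_def mono_ev_def ..

lemma card_fiber_sum:
  assumes "finite A" "finite C" "f ` A \<subseteq> C"
  shows "card A = (\<Sum>c\<in>C. card {x\<in>A. f x = c})"
proof -
  have "A = (\<Union>c\<in>C. {x\<in>A. f x = c})" using assms(3) by auto
  then have "card A = card (\<Union>c\<in>C. {x\<in>A. f x = c})" by simp
  also have "\<dots> = (\<Sum>c\<in>C. card {x\<in>A. f x = c})"
    by (rule card_UN_disjoint) (use assms in auto)
  finally show ?thesis .
qed

lemma base_inv:
  assumes fin: "finite L" and ne: "L \<noteq> {}"
  shows "NL TYPE('a::{finite,field}) n L = 0 \<or> (CARD('a) - 1) ^ n \<le> (CARD('a) - 1) * NL TYPE('a) n L"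
proof (cases "\<exists>u\<in>L. \<exists>w\<in>L. u \<noteq> w")
  case False
  then obtain p0 where L: "L = {p0}" using ne by blast
  obtain c :: "(nat \<Rightarrow> nat) \<Rightarrow> 'a" where c: "adm L c" "zero_count n L c = NL TYPE('a) n L"
    using NL_attained[OF ne] by blast
  have "c p0 \<noteq> 0" using c(1) L unfolding adm_def by auto
  then have "zero_count n L c = 0" unfolding zero_count_def eval_mono L
    by (auto simp: mono_ev_nz)
  then show ?thesis using c by simp
next
  case True
  then obtain u w where uw: "u \<in> L" "w \<in> L" "u \<noteq> w" by blast
  define q1 where "q1 = CARD('a) - 1"
  define NZ where "NZ = (UNIV - {0::'a})"
  define phi where "phi x = mono_ev n u x / mono_ev n w x" for x :: "nat \<Rightarrow> 'a"
  define fib where "fib c = {x \<in> (torus n :: (nat \<Rightarrow> 'a) set). phi x = c}" for c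
  have q1: "card NZ = q1" unfolding NZ_def q1_def by (simp add: card_Diff_singleton)
  have "(1::'a) \<in> NZ" unfolding NZ_def by simp
  then have NZne: "NZ \<noteq> {}" by auto
  have "phi ` torus n \<subseteq> NZ" unfolding phi_def NZ_def by (auto simp: mono_ev_nz)
  then have cs: "card (torus n :: (nat \<Rightarrow> 'a) set) = (\<Sum>c\<in>NZ. card (fib c))"
    unfolding fib_def by (intro card_fiber_sum) auto
  have "\<exists>c0\<in>NZ. q1 ^ n \<le> q1 * card (fib c0)"
  proof (rule ccontr)
    assume "\<not> ?thesis"
    then have lt: "\<forall>c\<in>NZ. q1 * card (fib c) < q1 ^ n" by auto
    have "q1 * q1 ^ n = q1 * (\<Sum>c\<in>NZ. card (fib c))" using cs card_torus[where 'a='a] q1_def by simp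
    also have "\<dots> = (\<Sum>c\<in>NZ. q1 * card (fib c))" by (simp add: sum_distrib_left)
    also have "\<dots> < (\<Sum>c\<in>NZ. q1 ^ n)" by (rule sum_strict_mono) (use lt NZne NZ_def in auto)
    also have "\<dots> = q1 * q1 ^ n" using q1 by simp
    finally show False by simp
  qed
  then obtain c0 where c0: "c0 \<in> NZ" "q1 ^ n \<le> q1 * card (fib c0)" by blast
  define cc where "cc p = (if p = u then 1 else if p = w then - c0 else 0)" for p
  have adm: "adm L cc" unfolding adm_def cc_def using uw by auto
  have ev: "eval_poly n L cc x = mono_ev n u x - c0 * mono_ev n w x" for x
  proof -
    have "eval_poly n L cc x = (\<Sum>p\<in>L. (if p = u then mono_ev n u x else 0) + (if p = w then - c0 * mono_ev n w x else 0))"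
      unfolding eval_mono cc_def by (rule sum.cong) (use uw in auto)
    also have "\<dots> = mono_ev n u x - c0 * mono_ev n w x"
      by (simp add: sum.distrib uw fin)
    finally show ?thesis .
  qed
  have "zero_count n L cc = card (fib c0)"
    unfolding zero_count_def fib_def ev phi_def
    by (rule arg_cong[where f=card], rule Collect_cong) (auto simp: mono_ev_nz field_simps)
  moreover have "zero_count n L cc \<le> NL TYPE('a) n L" by (rule NL_ge) (use adm in \<open>auto simp: adm_def\<close>)
  ultimately have "q1 * card (fib c0) \<le> q1 * NL TYPE('a) n L" by simp
  then have "q1 ^ n \<le> q1 * NL TYPE('a) n L" using c0(2) by linarith
  then show ?thesis unfolding q1_def by simp
qed



definition E1 :: "nat \<Rightarrow> (nat \<Rightarrow> nat) \<Rightarrow> (nat \<Rightarrow> nat)" where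
  "E1 m p = (\<lambda>i. if m \<le> i \<and> i < m + m then p (i - m) else if i = m + m then 1 else 0)"

definition e1 :: "nat \<Rightarrow> (nat \<Rightarrow> real) \<Rightarrow> (nat \<Rightarrow> real)" where
  "e1 m y = (\<lambda>i. if m \<le> i \<and> i < m + m then y (i - m) else if i = m + m then 1 else 0)"

definition Dn :: "nat \<Rightarrow> (nat \<Rightarrow> 'b::zero) \<Rightarrow> (nat \<Rightarrow> 'b)" where
  "Dn m v = (\<lambda>i. if i < m then v (i + m) else 0)"

lemma join_eq:
  assumes "\<forall>v\<in>P. in_dim m v"
  shows "join m P m P = conv (P \<union> e1 m ` P)"
proof -
  have 1: "(\<lambda>p. \<lambda>i. if i < m then p i else 0) ` P = P"
  proof -
    have "(\<lambda>i. if i < m then p i else 0) = p" if "p \<in> P" for p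
      using assms that unfolding in_dim_def by (auto simp: fun_eq_iff)
    then show ?thesis by (simp add: image_cong[OF refl])
  qed
  have 2: "(\<lambda>y. \<lambda>i. if m \<le> i \<and> i < m + m then y (i - m) else if i = m + m then 1 else 0) ` P = e1 m ` P"
    unfolding e1_def by simp
  show ?thesis unfolding join_def by (subst 1, subst 2) (rule refl)
qed

lemma in_box_dim: "in_box q m P \<Longrightarrow> v \<in> P \<Longrightarrow> in_dim m v"
  unfolding in_box_def by auto

lemma box_join:
  assumes box: "in_box q m P" and q3: "q \<ge> 3"
  shows "in_box q (2 * m + 1) (join m P m P)"
proof -
  have dim: "\<forall>v\<in>P. in_dim m v" using box in_box_dim by blast
  define hi where "hi i = (if i < 2 * m + 1 then real q - 2 else 0)" for i
  have gen: "\<forall>v\<in>P \<union> e1 m ` P. \<forall>i. (\<lambda>_. 0) i \<le> v i \<and> v i \<le> hi i"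
  proof (intro ballI allI)
    fix v i assume v: "v \<in> P \<union> e1 m ` P"
    show "(\<lambda>_. 0) i \<le> v i \<and> v i \<le> hi i"
    proof (cases "v \<in> P")
      case True
      then show ?thesis using box q3 unfolding in_box_def in_dim_def hi_def
        by (cases "i < m") auto
    next
      case False
      then obtain y where y: "y \<in> P" "v = e1 m y" using v by auto
      have yb: "\<forall>j<m. 0 \<le> y j \<and> y j \<le> real q - 2" using box y(1) unfolding in_box_def by auto
      show ?thesis using q3 yb unfolding y(2) e1_def hi_def by auto
    qed
  qed
  show ?thesis unfolding in_box_def in_dim_def join_eq[OF dim]
  proof (intro ballI conjI allI impI)
    fix x i assume x: "x \<in> conv (P \<union> e1 m ` P)"
    note b = conv_bounds[OF gen x, of i]
    { assume "2 * m + 1 \<le> i" then show "x i = 0" using b unfolding hi_def by auto }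
    { assume "i < 2 * m + 1" then show "0 \<le> x i" "x i \<le> real q - 2" using b unfolding hi_def by auto }
  qed
qed

lemma lattice_join:
  assumes box: "in_box q m P" and cv: "conv P \<subseteq> P"
  shows "lattice_pts (2 * m + 1) (join m P m P) = lattice_pts m P \<union> E1 m ` lattice_pts m P"
proof -
  have dim: "\<forall>v\<in>P. in_dim m v" using box in_box_dim by blast
  note J = join_eq[OF dim]
  have Ee: "(\<lambda>i. real (E1 m p i)) = e1 m (\<lambda>i. real (p i))" for p
    unfolding E1_def e1_def by auto
  show ?thesis
  proof
    show "lattice_pts (2 * m + 1) (join m P m P) \<subseteq> lattice_pts m P \<union> E1 m ` lattice_pts m P"
    proof
      fix p assume "p \<in> lattice_pts (2 * m + 1) (join m P m P)"
      then have pz: "\<forall>i\<ge>2 * m + 1. p i = 0" and px: "(\<lambda>i. real (p i)) \<in> conv (P \<union> e1 m ` P)"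
        unfolding lattice_pts_def J by auto
      then obtain F u where F: "finite F" "F \<subseteq> P \<union> e1 m ` P" "\<forall>v\<in>F. 0 \<le> u v" "sum u F = 1"
        and pe: "(\<lambda>i. real (p i)) = (\<lambda>i. \<Sum>v\<in>F. u v * v i)" unfolding conv_def by blast
      have pi: "real (p i) = (\<Sum>v\<in>F. u v * v i)" for i using pe by (simp add: fun_eq_iff)
      define F0 where "F0 = F \<inter> P"
      define F1 where "F1 = F - P"
      have F1e: "F1 \<subseteq> e1 m ` P" using F(2) unfolding F1_def by auto
      have fin0: "finite F0" "finite F1" using F(1) unfolding F0_def F1_def by auto
      have spl: "sum f F = sum f F0 + sum f F1" for f :: "_ \<Rightarrow> real"
      proof -
        have "F = F0 \<union> F1" "F0 \<inter> F1 = {}" unfolding F0_def F1_def by auto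
        then show ?thesis using sum.union_disjoint[OF fin0] by metis
      qed
      have v0: "v (m + m) = 0" if "v \<in> F0" for v using dim that unfolding F0_def in_dim_def by auto
      have v1: "v (m + m) = 1" if "v \<in> F1" for v using F1e that unfolding e1_def by auto
      have v1b: "v i = 0" if "v \<in> F1" "i < m" for v i using F1e that unfolding e1_def by auto
      have c: "real (p (m + m)) = sum u F1"
        unfolding pi spl by (simp add: v0 v1)
      have s0: "0 \<le> sum u F0" "0 \<le> sum u F1" using F(3) unfolding F0_def F1_def by (auto intro: sum_nonneg)
      have s01: "sum u F0 + sum u F1 = 1" using F(4) spl by simp
      have "p (m + m) \<le> 1" using c s0 s01 by linarith
      then consider "p (m + m) = 0" | "p (m + m) = 1" by linarith
      then show "p \<in> lattice_pts m P \<union> E1 m ` lattice_pts m P"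
      proof cases
        case 1
        then have "sum u F1 = 0" using c by simp
        then have u1: "\<forall>v\<in>F1. u v = 0" using sum_nonneg_eq_0_iff[OF fin0(2)] F(3) unfolding F1_def by auto
        have pi0: "real (p i) = (\<Sum>v\<in>F0. u v * v i)" for i unfolding pi spl using u1 by simp
        have su0: "sum u F0 = 1" using s01 \<open>sum u F1 = 0\<close> by simp
        have F0P: "F0 \<subseteq> P" "F0 \<noteq> {}" "\<forall>v\<in>F0. 0 \<le> u v" using su0 F(3) unfolding F0_def by auto
        have "(\<lambda>i. real (p i)) \<in> conv P"
          unfolding conv_def mem_Collect_eq
          apply (rule exI[of _ F0], rule exI[of _ u])
          using fin0(1) su0 F0P pi0 by (auto simp: fun_eq_iff)
        then have inP: "(\<lambda>i. real (p i)) \<in> P" using cv by auto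
        have "p i = 0" if "i \<ge> m" for i
        proof -
          have "real (p i) = 0" unfolding pi0 F0_def using dim that unfolding in_dim_def by (intro sum.neutral) auto
          then show ?thesis by simp
        qed
        then show ?thesis using inP unfolding lattice_pts_def by auto
      next
        case 2
        then have "sum u F0 = 0" using c s01 by simp
        then have u0: "\<forall>v\<in>F0. u v = 0" using sum_nonneg_eq_0_iff[OF fin0(1)] F(3) unfolding F0_def by auto
        have pi1: "real (p i) = (\<Sum>v\<in>F1. u v * v i)" for i unfolding pi spl using u0 by simp
        have su1: "sum u F1 = 1" using s01 \<open>sum u F0 = 0\<close> by simp
        define pd where "pd = Dn m p"
        have DP: "Dn m v \<in> P" if vF: "v \<in> F1" for v
        proof -
          obtain y where y: "y \<in> P" "v = e1 m y" using F1e vF by auto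
          have "Dn m v = y" using dim y unfolding Dn_def e1_def in_dim_def by (auto simp: fun_eq_iff)
          then show ?thesis using y by simp
        qed
        have pde: "(\<lambda>i. real (pd i)) = (\<lambda>i. \<Sum>v\<in>F1. u v * Dn m v i)"
          unfolding pd_def Dn_def using pi1 by (auto simp: fun_eq_iff)
        have "(\<lambda>i. real (pd i)) \<in> conv P" unfolding pde
          by (rule conv_comb) (use fin0 su1 F(3) DP conv_single in \<open>auto simp: F1_def\<close>)
        then have "pd \<in> lattice_pts m P" using cv unfolding lattice_pts_def pd_def Dn_def by auto
        moreover have "p = E1 m pd"
        proof
          fix i
          show "p i = E1 m pd i"
          proof (cases "i < m")
            case True
            have "real (p i) = 0" unfolding pi1 using v1b True by (intro sum.neutral) auto
            then show ?thesis using True unfolding E1_def by simp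
          next
            case False
            then show ?thesis using pz 2 unfolding E1_def pd_def Dn_def by auto
          qed
        qed
        ultimately show ?thesis by blast
      qed
    qed
  next
    show "lattice_pts m P \<union> E1 m ` lattice_pts m P \<subseteq> lattice_pts (2 * m + 1) (join m P m P)"
    proof
      fix p assume "p \<in> lattice_pts m P \<union> E1 m ` lattice_pts m P"
      then consider "p \<in> lattice_pts m P" | p0 where "p0 \<in> lattice_pts m P" "p = E1 m p0" by blast
      then show "p \<in> lattice_pts (2 * m + 1) (join m P m P)"
      proof cases
        case 1
        then show ?thesis unfolding lattice_pts_def J using conv_single by auto
      next
        case 2
        have "(\<lambda>i. real (p i)) \<in> e1 m ` P" using 2 unfolding lattice_pts_def by (auto simp: Ee)
        moreover have "\<forall>i\<ge>2 * m + 1. p i = 0" using 2 unfolding E1_def by auto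
        ultimately show ?thesis unfolding lattice_pts_def J using conv_single by auto
      qed
    qed
  qed
qed



lemma prod_L:
  fixes m :: nat and p :: "nat \<Rightarrow> nat"
  assumes "\<forall>i\<ge>m. p i = 0"
  shows "(\<Prod>i<2*m+1. x i ^ p i) = (\<Prod>i<m. (x i :: 'a::comm_ring_1) ^ p i)"
  by (rule prod.mono_neutral_right) (use assms in auto)

lemma prod_E1:
  "(\<Prod>i<2*m+1. x i ^ E1 m p i) = x (m + m) * (\<Prod>i<m. (x (i + m) :: 'a::comm_ring_1) ^ p i)"
proof -
  have "{..<2*m+1} = {..<Suc (m + m)}" by simp
  then have "(\<Prod>i<2*m+1. x i ^ E1 m p i) = (\<Prod>i<m + m. x i ^ E1 m p i) * x (m + m) ^ E1 m p (m + m)"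
    by (simp only: prod.lessThan_Suc)
  also have "x (m + m) ^ E1 m p (m + m) = x (m + m)" unfolding E1_def by simp
  also have "(\<Prod>i<m + m. x i ^ E1 m p i) = (\<Prod>i\<in>{0..<m}. x i ^ E1 m p i) * (\<Prod>i\<in>{m..<m+m}. x i ^ E1 m p i)"
    by (simp add: atLeast0LessThan[symmetric] prod.atLeastLessThan_concat)
  also have "(\<Prod>i\<in>{0..<m}. x i ^ E1 m p i) = 1" unfolding E1_def by (intro prod.neutral) auto
  also have "(\<Prod>i\<in>{m..<m+m}. x i ^ E1 m p i) = (\<Prod>i\<in>{0..<m}. x (i + m) ^ E1 m p (i + m))"
    using prod.shift_bounds_nat_ivl[of "\<lambda>i. x i ^ E1 m p i" 0 m m] by simp
  also have "\<dots> = (\<Prod>i<m. x (i + m) ^ p i)" unfolding E1_def atLeast0LessThan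
    by (intro prod.cong) auto
  finally show ?thesis by simp
qed

lemma E1_inj:
  fixes L :: "(nat \<Rightarrow> nat) set" and m :: nat
  assumes L: "\<forall>p\<in>L. \<forall>i\<ge>m. p i = 0" shows "inj_on (E1 m) L"
proof (rule inj_onI)
  fix p p' assume pp: "p \<in> L" "p' \<in> L" "E1 m p = E1 m p'"
  show "p = p'"
  proof
    fix i show "p i = p' i"
    proof (cases "i < m")
      case True
      have "E1 m p (i + m) = E1 m p' (i + m)" using pp by simp
      then show ?thesis using True unfolding E1_def by simp
    next
      case False then show ?thesis by (metis L pp(1) pp(2) not_less)
    qed
  qed
qed

lemma E1_notin: "\<forall>p\<in>L. \<forall>i\<ge>m. p i = 0 \<Longrightarrow> E1 m p \<notin> L"
proof
  assume L: "\<forall>p\<in>L. \<forall>i\<ge>m. p i = 0" and "E1 m p \<in> L"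
  then have "E1 m p (m + m) = 0" by auto
  then show False unfolding E1_def by simp
qed

lemma eval_join:
  assumes L: "\<forall>p\<in>L. \<forall>i\<ge>m. p i = 0" and fin: "finite L"
  shows "eval_poly (2*m+1) (L \<union> E1 m ` L) c (x :: nat \<Rightarrow> 'a::field) =
     eval_poly m L c x + x (m + m) * eval_poly m L (\<lambda>p. c (E1 m p)) (\<lambda>i. x (i + m))"
proof -
  have disj: "L \<inter> E1 m ` L = {}" using E1_notin[OF L] by auto
  have "eval_poly (2*m+1) (L \<union> E1 m ` L) c x =
        (\<Sum>p\<in>L. c p * (\<Prod>i<2*m+1. x i ^ p i)) + (\<Sum>p\<in>E1 m ` L. c p * (\<Prod>i<2*m+1. x i ^ p i))"
    unfolding eval_poly_def using fin disj by (simp add: sum.union_disjoint)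
  also have "(\<Sum>p\<in>E1 m ` L. c p * (\<Prod>i<2*m+1. x i ^ p i)) = (\<Sum>p\<in>L. c (E1 m p) * (\<Prod>i<2*m+1. x i ^ E1 m p i))"
    using sum.reindex[OF E1_inj[OF L]] by simp
  also have "\<dots> = x (m + m) * eval_poly m L (\<lambda>p. c (E1 m p)) (\<lambda>i. x (i + m))"
    unfolding eval_poly_def prod_E1 by (simp add: sum_distrib_left mult_ac)
  also have "(\<Sum>p\<in>L. c p * (\<Prod>i<2*m+1. x i ^ p i)) = eval_poly m L c x"
    unfolding eval_poly_def by (rule sum.cong[OF refl], subst prod_L) (use L in auto)
  finally show ?thesis .
qed



definition spl :: "nat \<Rightarrow> (nat \<Rightarrow> 'a) \<Rightarrow> (nat \<Rightarrow> 'a) \<times> (nat \<Rightarrow> 'a) \<times> 'a" where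
  "spl m x = (restrict x {..<m}, restrict (\<lambda>i. x (i + m)) {..<m}, x (m + m))"

definition cmb :: "nat \<Rightarrow> (nat \<Rightarrow> 'a) \<times> (nat \<Rightarrow> 'a) \<times> 'a \<Rightarrow> (nat \<Rightarrow> 'a)" where
  "cmb m w = (case w of (y, z, t) \<Rightarrow> (\<lambda>i. if i < m then y i else if i < m + m then z (i - m)
      else if i = m + m then t else undefined))"

lemma spl_bij: "bij_betw (spl m) (torus (2*m+1) :: (nat\<Rightarrow>'a::{finite,field}) set)
   (torus m \<times> torus m \<times> (UNIV - {0}))"
proof (rule bij_betw_byWitness[where f'="cmb m"])
  show "\<forall>x\<in>(torus (2*m+1) :: (nat\<Rightarrow>'a) set). cmb m (spl m x) = x"
    unfolding torus_def cmb_def spl_def by (auto simp: fun_eq_iff PiE_def extensional_def)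
  show "\<forall>w\<in>(torus m \<times> torus m \<times> (UNIV - {0}) :: ((nat\<Rightarrow>'a) \<times> (nat\<Rightarrow>'a) \<times> 'a) set). spl m (cmb m w) = w"
    unfolding torus_def cmb_def spl_def by (auto simp: fun_eq_iff PiE_def extensional_def)
  show "spl m ` (torus (2*m+1) :: (nat\<Rightarrow>'a) set) \<subseteq> torus m \<times> torus m \<times> (UNIV - {0})"
    unfolding torus_def cmb_def spl_def by (auto simp: PiE_def extensional_def)
  show "cmb m ` (torus m \<times> torus m \<times> (UNIV - {0})) \<subseteq> (torus (2*m+1) :: (nat\<Rightarrow>'a) set)"
    unfolding torus_def cmb_def spl_def by (auto simp: PiE_def extensional_def Pi_iff split: if_splits)
qed

lemma eval_restrict: "eval_poly n L c (restrict x {..<n}) = eval_poly n L c x"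
  unfolding eval_poly_def by simp

lemma card_bij_filter:
  assumes "bij_betw f A B"
  shows "card {x\<in>A. Q (f x)} = card {y\<in>B. Q y}"
proof -
  have "inj_on f {x\<in>A. Q (f x)}" using assms unfolding bij_betw_def by (auto intro: inj_on_subset)
  moreover have "f ` {x\<in>A. Q (f x)} = {y\<in>B. Q y}" using assms unfolding bij_betw_def by auto
  ultimately show ?thesis using card_image by metis
qed

lemma card_t:
  "card {t \<in> UNIV - {0::'a::{finite,field}}. a + t * b = 0} =
    (if b = 0 then (if a = 0 then CARD('a) - 1 else 0) else (if a = 0 then 0 else 1))"
proof (cases "b = 0")
  case True
  have "{t::'a. t \<noteq> 0} = UNIV - {0}" by auto
  then have "card {t::'a. t \<noteq> 0} = CARD('a) - 1" by (simp add: card_Diff_singleton)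
  then show ?thesis using True by auto
next
  case False
  have eq: "a + t * b = 0 \<longleftrightarrow> t = - a / b" for t
  proof -
    have "a + t * b = 0 \<longleftrightarrow> t * b = - a" by (metis add.commute eq_neg_iff_add_eq_0)
    also have "\<dots> \<longleftrightarrow> t = - a / b" using False by (auto simp: field_simps)
    finally show ?thesis .
  qed
  have "{t \<in> UNIV - {0::'a}. a + t * b = 0} = (if a = 0 then {} else {- a / b})"
    using False by (auto simp: eq)
  then show ?thesis using False by simp
qed

lemma sum_if_card:
  assumes "finite S"
  shows "(\<Sum>x\<in>S. if P x then a else b) = card {x\<in>S. P x} * a + (card S - card {x\<in>S. P x}) * (b::nat)"
proof -
  have "(\<Sum>x\<in>S. if P x then a else b) = sum (\<lambda>_. a) (S \<inter> {x. P x}) + sum (\<lambda>_. b) (S \<inter> - {x. P x})"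
    using assms by (rule sum.If_cases)
  moreover have "S \<inter> - {x. P x} = S - {x\<in>S. P x}" "S \<inter> {x. P x} = {x\<in>S. P x}" by auto
  moreover have "card (S - {x\<in>S. P x}) = card S - card {x\<in>S. P x}"
    using assms by (intro card_Diff_subset) auto
  ultimately show ?thesis by simp
qed



lemma zc_join:
  fixes c :: "(nat\<Rightarrow>nat) \<Rightarrow> 'a::{finite,field}"
  assumes L: "\<forall>p\<in>L. \<forall>i\<ge>m. p i = 0" and fin: "finite L"
  shows "zero_count (2*m+1) (L \<union> E1 m ` L) c =
     zero_count m L c * (zero_count m L (\<lambda>p. c (E1 m p)) * (CARD('a) - 1))
     + ((CARD('a) - 1) ^ m - zero_count m L c) * ((CARD('a) - 1) ^ m - zero_count m L (\<lambda>p. c (E1 m p)))"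
proof -
  define g where "g y = eval_poly m L c y" for y :: "nat \<Rightarrow> 'a"
  define h where "h z = eval_poly m L (\<lambda>p. c (E1 m p)) z" for z :: "nat \<Rightarrow> 'a"
  define T where "T = (torus m :: (nat \<Rightarrow> 'a) set)"
  define NZ where "NZ = (UNIV - {0::'a})"
  define Q where "Q w = (case w of (y, z, t) \<Rightarrow> g y + t * h z = 0)" for w :: "(nat \<Rightarrow> 'a) \<times> (nat \<Rightarrow> 'a) \<times> 'a"
  define A where "A = card {y\<in>T. g y = 0}"
  define B where "B = card {z\<in>T. h z = 0}"
  have A: "A = zero_count m L c" unfolding A_def zero_count_def g_def T_def ..
  have B: "B = zero_count m L (\<lambda>p. c (E1 m p))" unfolding B_def zero_count_def h_def T_def ..
  have cT: "card T = (CARD('a) - 1) ^ m" unfolding T_def by (rule card_torus)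
  have finT: "finite T" unfolding T_def by simp
  have ev: "eval_poly (2*m+1) (L \<union> E1 m ` L) c x = 0 \<longleftrightarrow> Q (spl m x)" for x
    unfolding eval_join[OF L fin] Q_def spl_def g_def h_def by (simp add: mult.commute eval_restrict)
  have "zero_count (2*m+1) (L \<union> E1 m ` L) c = card {x \<in> (torus (2*m+1) :: (nat \<Rightarrow> 'a) set). Q (spl m x)}"
    unfolding zero_count_def ev ..
  also have "\<dots> = card {w \<in> T \<times> T \<times> NZ. Q w}" unfolding T_def NZ_def
    by (rule card_bij_filter[OF spl_bij])
  also have "{w \<in> T \<times> T \<times> NZ. Q w} = Sigma T (\<lambda>y. Sigma T (\<lambda>z. {t\<in>NZ. g y + t * h z = 0}))"
    unfolding Q_def by auto
  also have "card \<dots> = (\<Sum>y\<in>T. \<Sum>z\<in>T. card {t\<in>NZ. g y + t * h z = 0})"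
    using finT by (simp add: card_SigmaI)
  also have "\<dots> = (\<Sum>y\<in>T. if g y = 0 then B * (CARD('a) - 1) else card T - B)"
  proof (rule sum.cong[OF refl])
    fix y
    have "(\<Sum>z\<in>T. card {t\<in>NZ. g y + t * h z = 0}) =
          (\<Sum>z\<in>T. if h z = 0 then (if g y = 0 then CARD('a) - 1 else 0) else (if g y = 0 then 0 else 1))"
      unfolding NZ_def card_t ..
    also have "\<dots> = (if g y = 0 then B * (CARD('a) - 1) else card T - B)"
      using sum_if_card[OF finT, of "\<lambda>z. h z = 0"] unfolding B_def by auto
    finally show "(\<Sum>z\<in>T. card {t\<in>NZ. g y + t * h z = 0}) = (if g y = 0 then B * (CARD('a) - 1) else card T - B)" .
  qed
  also have "\<dots> = A * (B * (CARD('a) - 1)) + (card T - A) * (card T - B)"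
    using sum_if_card[OF finT, of "\<lambda>y. g y = 0"] unfolding A_def by simp
  finally show ?thesis unfolding A B cT .
qed



lemma lin_max:
  fixes s r a N :: real
  assumes "0 \<le> a" "a \<le> N"
  shows "s * a + r \<le> max r (s * N + r)"
proof (cases "s \<ge> 0")
  case True
  then have "s * a \<le> s * N" using assms by (intro mult_left_mono)
  then show ?thesis by simp
next
  case False
  then have "s * a \<le> 0" using assms by (simp add: mult_nonpos_nonneg)
  then show ?thesis by simp
qed

lemma real_bound:
  fixes q1 N T a b :: real
  assumes q1: "q1 \<ge> 1" and N: "0 \<le> N" "N \<le> T" and inv: "N = 0 \<or> T \<le> q1 * N"
    and ab: "(a = T \<and> 0 \<le> b \<and> b \<le> N) \<or> (b = T \<and> 0 \<le> a \<and> a \<le> N) \<or> (0 \<le> a \<and> a \<le> N \<and> 0 \<le> b \<and> b \<le> N)"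
  shows "a * (b * q1) + (T - a) * (T - b) \<le> max (N * (T * q1)) (N * (N * q1) + (T - N) * (T - N))"
proof -
  define M where "M = max (N * (T * q1)) (N * (N * q1) + (T - N) * (T - N))"
  have TT: "T * T \<le> M"
    using inv
  proof
    assume "N = 0" then show ?thesis unfolding M_def by simp
  next
    assume "T \<le> q1 * N"
    then have "T * T \<le> (q1 * N) * T" using N by (intro mult_right_mono) auto
    then show ?thesis unfolding M_def by (simp add: mult_ac)
  qed
  from ab consider "a = T" "0 \<le> b" "b \<le> N" | "b = T" "0 \<le> a" "a \<le> N" | "0 \<le> a" "a \<le> N" "0 \<le> b" "b \<le> N"
    by blast
  then show ?thesis
  proof cases
    case 1
    have "T * (b * q1) \<le> T * (N * q1)" using 1 N q1 by (intro mult_left_mono) auto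
    then show ?thesis using 1 unfolding M_def[symmetric] by (simp add: M_def mult_ac)
  next
    case 2
    have "a * (T * q1) \<le> N * (T * q1)" using 2 N q1 by (intro mult_right_mono) auto
    then show ?thesis using 2 by simp
  next
    case 3
    have e: "a * (b * q1) + (T - a) * (T - b) = ((q1 + 1) * b - T) * a + (T * T - T * b)"
      by (simp add: algebra_simps)
    have "\<dots> \<le> max (T * T - T * b) (((q1 + 1) * b - T) * N + (T * T - T * b))"
      using 3 by (intro lin_max) auto
    also have "\<dots> \<le> M"
    proof (rule max.boundedI)
      have "T * b \<ge> 0" using 3 N by simp
      then show "T * T - T * b \<le> M" using TT by linarith
    next
      have e2: "((q1 + 1) * b - T) * N + (T * T - T * b) = ((q1 + 1) * N - T) * b + (T * T - T * N)"
        by (simp add: algebra_simps)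
      have "\<dots> \<le> max (T * T - T * N) (((q1 + 1) * N - T) * N + (T * T - T * N))"
        using 3 by (intro lin_max) auto
      also have "\<dots> \<le> M"
      proof (rule max.boundedI)
        have "T * N \<ge> 0" using N by simp
        then show "T * T - T * N \<le> M" using TT by linarith
      next
        have "((q1 + 1) * N - T) * N + (T * T - T * N) = N * (N * q1) + (T - N) * (T - N)"
          by (simp add: algebra_simps)
        then show "((q1 + 1) * N - T) * N + (T * T - T * N) \<le> M" unfolding M_def by simp
      qed
      finally show "((q1 + 1) * b - T) * N + (T * T - T * b) \<le> M" using e2 by simp
    qed
    finally show ?thesis using e unfolding M_def by simp
  qed
qed



lemma Dn_E1: "\<forall>i\<ge>m. p i = 0 \<Longrightarrow> Dn m (E1 m p) = p"
  unfolding Dn_def E1_def by (auto simp: fun_eq_iff)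

lemma NL_join:
  assumes L: "\<forall>p\<in>L. \<forall>i\<ge>m. p i = 0" and fin: "finite L" and ne: "L \<noteq> {}"
    and inv: "NL TYPE('a::{finite,field}) m L = 0 \<or> (CARD('a) - 1) ^ m \<le> (CARD('a) - 1) * NL TYPE('a) m L"
  shows "NL TYPE('a) (2*m+1) (L \<union> E1 m ` L) =
     max (NL TYPE('a) m L * ((CARD('a) - 1) ^ m * (CARD('a) - 1)))
         (NL TYPE('a) m L * (NL TYPE('a) m L * (CARD('a) - 1)) +
          ((CARD('a) - 1) ^ m - NL TYPE('a) m L) * ((CARD('a) - 1) ^ m - NL TYPE('a) m L))"
    (is "_ = ?M")
proof -
  define q1 where "q1 = CARD('a) - 1"
  define T where "T = q1 ^ m"
  define N where "N = NL TYPE('a) m L"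
  have q1: "q1 \<ge> 1" unfolding q1_def using finite_UNIV_card_ge_0[where 'a='a]
  proof -
    have "(0::'a) \<noteq> 1" by simp
    then have "card {0::'a, 1} \<le> CARD('a)" by (intro card_mono) auto
    then show "1 \<le> CARD('a) - 1" by simp
  qed
  have NT: "N \<le> T" unfolding N_def T_def q1_def by (rule NL_le[OF ne])
  have inv': "N = 0 \<or> T \<le> q1 * N" using inv unfolding N_def T_def q1_def .
  have inv_r: "real N = 0 \<or> real T \<le> real q1 * real N"
    using inv' by (metis of_nat_0 of_nat_le_iff of_nat_mult)
  let ?F = "\<lambda>A B. A * (B * q1) + (T - A) * (T - B)"
  have Mq: "?M = max (N * (T * q1)) (N * (N * q1) + (T - N) * (T - N))"
    unfolding N_def T_def q1_def ..
  have real_F: "real (?F A B) = real A * (real B * real q1) + (real T - real A) * (real T - real B)"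
    if "A \<le> T" "B \<le> T" for A B using that by (simp add: of_nat_diff)
  have real_M: "real (max (N * (T * q1)) (N * (N * q1) + (T - N) * (T - N))) =
     max (real N * (real T * real q1)) (real N * (real N * real q1) + (real T - real N) * (real T - real N))"
    using NT by (simp add: of_nat_diff of_nat_max)
  have zc: "zero_count (2*m+1) (L \<union> E1 m ` L) c = ?F (zero_count m L c) (zero_count m L (\<lambda>p. c (E1 m p)))"
    for c :: "(nat \<Rightarrow> nat) \<Rightarrow> 'a"
    unfolding zc_join[OF L fin] q1_def T_def ..
  have bnd: "zero_count m L c \<le> N" if "\<exists>p\<in>L. c p \<noteq> 0" for c :: "(nat \<Rightarrow> nat) \<Rightarrow> 'a"
    unfolding N_def using that by (rule NL_ge)
  have full: "zero_count m L c = T" if "\<forall>p\<in>L. c p = 0" for c :: "(nat \<Rightarrow> nat) \<Rightarrow> 'a"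
    unfolding T_def q1_def using that by (rule zero_count_zero)
  have upper: "zero_count (2*m+1) (L \<union> E1 m ` L) c \<le> ?M" if adm: "adm (L \<union> E1 m ` L) c" for c :: "(nat \<Rightarrow> nat) \<Rightarrow> 'a"
  proof -
    define A where "A = zero_count m L c"
    define B where "B = zero_count m L (\<lambda>p. c (E1 m p))"
    have AT: "A \<le> T" "B \<le> T" unfolding A_def B_def T_def q1_def by (rule zero_count_le)+
    have "(\<exists>p\<in>L. c p \<noteq> 0) \<or> (\<exists>p\<in>L. c (E1 m p) \<noteq> 0)" using adm unfolding adm_def by auto
    then have cases: "(A = T \<and> B \<le> N) \<or> (B = T \<and> A \<le> N) \<or> (A \<le> N \<and> B \<le> N)"
      unfolding A_def B_def using bnd full[of c] full[of "\<lambda>p. c (E1 m p)"] bnd[of "\<lambda>p. c (E1 m p)"] by metis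
    have "real (?F A B) \<le> real ?M"
      unfolding real_F[OF AT] Mq real_M
      by (rule real_bound) (use q1 NT inv_r cases in auto)
    then show ?thesis unfolding zc A_def B_def by linarith
  qed
  obtain cN :: "(nat \<Rightarrow> nat) \<Rightarrow> 'a" where cN: "adm L cN" "zero_count m L cN = N"
    using NL_attained[OF ne] unfolding N_def by blast
  define ca where "ca p = (if p \<in> L then cN p else 0)" for p
  define cb where "cb p = (if p \<in> L then cN p else if p \<in> E1 m ` L then cN (Dn m p) else 0)" for p
  have adma: "adm (L \<union> E1 m ` L) ca" using cN(1) unfolding adm_def ca_def by auto
  have admb: "adm (L \<union> E1 m ` L) cb" using cN(1) unfolding adm_def cb_def by auto
  have za: "zero_count (2*m+1) (L \<union> E1 m ` L) ca = N * (T * q1)"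
  proof -
    have "zero_count m L ca = N" using cN(2) zero_count_cong[of L ca cN m] unfolding ca_def by simp
    moreover have "zero_count m L (\<lambda>p. ca (E1 m p)) = T"
      by (rule full) (use E1_notin[OF L] in \<open>auto simp: ca_def\<close>)
    ultimately show ?thesis unfolding zc by simp
  qed
  have zb: "zero_count (2*m+1) (L \<union> E1 m ` L) cb = N * (N * q1) + (T - N) * (T - N)"
  proof -
    have "zero_count m L cb = N" using cN(2) zero_count_cong[of L cb cN m] unfolding cb_def by simp
    moreover have "zero_count m L (\<lambda>p. cb (E1 m p)) = N"
    proof -
      have "\<forall>p\<in>L. cb (E1 m p) = cN p" using E1_notin[OF L] Dn_E1 L unfolding cb_def by auto
      then show ?thesis using cN(2) zero_count_cong[of L "\<lambda>p. cb (E1 m p)" cN m] by simp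
    qed
    ultimately show ?thesis unfolding zc by simp
  qed
  show ?thesis
  proof (cases "N * (N * q1) + (T - N) * (T - N) \<le> N * (T * q1)")
    case True
    show ?thesis by (rule NL_eqI[OF upper adma]) (use True za Mq in auto)
  next
    case False
    show ?thesis by (rule NL_eqI[OF upper admb]) (use False zb Mq in auto)
  qed
qed



lemma M_ge:
  fixes N T q1 :: nat
  assumes "N = 0 \<or> T \<le> q1 * N"
  shows "T * T \<le> max (N * (T * q1)) (N * (N * q1) + (T - N) * (T - N))"
  using assms
proof
  assume "N = 0" then show ?thesis by simp
next
  assume "T \<le> q1 * N"
  then have "T * T \<le> (q1 * N) * T" by (rule mult_right_mono) simp
  then have "T * T \<le> N * (T * q1)" by (simp add: mult_ac)
  then show ?thesis by (rule max.coboundedI1)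
qed

lemma lattice_finite:
  assumes "in_box q m P"
  shows "finite (lattice_pts m P)"
proof (rule finite_subset[OF _ finite_bounded_funs[of m q]])
  show "lattice_pts m P \<subseteq> {p. (\<forall>i\<ge>m. p i = 0) \<and> (\<forall>i<m. p i \<le> q)}"
  proof
    fix p assume p: "p \<in> lattice_pts m P"
    have "p i \<le> q" if "i < m" for i
    proof -
      have pP: "(\<lambda>i. real (p i)) \<in> P" using p unfolding lattice_pts_def by simp
      have "\<forall>x\<in>P. in_dim m x \<and> (\<forall>i<m. 0 \<le> x i \<and> x i \<le> real q - 2)"
        using assms unfolding in_box_def .
      from bspec[OF this pP] have "real (p i) \<le> real q - 2" using that by simp
      then show ?thesis by linarith
    qed
    then show "p \<in> {p. (\<forall>i\<ge>m. p i = 0) \<and> (\<forall>i<m. p i \<le> q)}" using p unfolding lattice_pts_def by auto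
  qed
qed

lemma lattice_base_ne:
  assumes poly: "integral_polytope n P" and box: "in_box q n P"
  shows "lattice_pts n P \<noteq> {}"
proof -
  obtain V where V: "finite V" "V \<noteq> {}" "\<forall>v\<in>V. int_point n v" "P = conv V"
    using poly unfolding integral_polytope_def by blast
  obtain v where v: "v \<in> V" using V(2) by auto
  have vP: "v \<in> P" using V(4) v conv_single by auto
  define p where "p i = nat \<lfloor>v i\<rfloor>" for i
  have "real (p i) = v i" for i
  proof -
    have vi: "v i \<in> \<int>" using V(3) v unfolding int_point_def by auto
    have "0 \<le> v i" using box vP unfolding in_box_def in_dim_def by (cases "i < n") auto
    obtain k where k: "v i = of_int k" using vi by (rule Ints_cases)
    have "0 \<le> k" using \<open>0 \<le> v i\<close> k by simp
    then show ?thesis unfolding p_def k by simp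
  qed
  then have "(\<lambda>i. real (p i)) = v" by auto
  moreover have "\<forall>i\<ge>n. p i = 0" using V(3) v unfolding p_def int_point_def in_dim_def by auto
  ultimately have "p \<in> lattice_pts n P" unfolding lattice_pts_def using vP by auto
  then show ?thesis by auto
qed

lemma invariant:
  assumes q3: "CARD('a::{finite,field}) \<ge> 3"
    and poly: "integral_polytope n P"
    and box: "in_box (CARD('a)) n P"
  shows "conv (Pk n P k) \<subseteq> Pk n P k \<and> in_box (CARD('a)) (dimk n k) (Pk n P k) \<and>
    finite (lattice_pts (dimk n k) (Pk n P k)) \<and> lattice_pts (dimk n k) (Pk n P k) \<noteq> {} \<and>
    (NL TYPE('a) (dimk n k) (lattice_pts (dimk n k) (Pk n P k)) = 0 \<or>
     (CARD('a) - 1) ^ dimk n k \<le> (CARD('a) - 1) * NL TYPE('a) (dimk n k) (lattice_pts (dimk n k) (Pk n P k)))"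
proof (induction k)
  case 0
  obtain V where V: "P = conv V" using poly unfolding integral_polytope_def by blast
  have c: "conv P \<subseteq> P" unfolding V by (rule conv_conv)
  have f: "finite (lattice_pts n P)" using box by (rule lattice_finite)
  have ne: "lattice_pts n P \<noteq> {}" using poly box by (rule lattice_base_ne)
  have "\<forall>p\<in>lattice_pts n P. \<forall>i\<ge>n. p i = 0" unfolding lattice_pts_def by auto
  show ?case using c box f ne base_inv[OF f ne, where n=n and 'a='a] by simp
next
  case (Suc k)
  define m where "m = dimk n k"
  define Q where "Q = Pk n P k"
  define L where "L = lattice_pts m Q"
  have IH: "conv Q \<subseteq> Q" "in_box (CARD('a)) m Q" "finite L" "L \<noteq> {}"
     "NL TYPE('a) m L = 0 \<or> (CARD('a) - 1) ^ m \<le> (CARD('a) - 1) * NL TYPE('a) m L"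
    unfolding m_def Q_def L_def using Suc.IH by blast+
  have Lz: "\<forall>p\<in>L. \<forall>i\<ge>m. p i = 0" unfolding L_def lattice_pts_def by auto
  have Pk: "Pk n P (Suc k) = join m Q m Q" "dimk n (Suc k) = 2 * m + 1" unfolding m_def Q_def by simp_all
  have LL: "lattice_pts (2 * m + 1) (join m Q m Q) = L \<union> E1 m ` L"
    unfolding L_def by (rule lattice_join[OF IH(2,1)])
  have c: "conv (join m Q m Q) \<subseteq> join m Q m Q" unfolding join_def by (rule conv_conv)
  have b: "in_box (CARD('a)) (2 * m + 1) (join m Q m Q)" using IH(2) q3 by (rule box_join)
  note NJ = NL_join[OF Lz IH(3,4,5)]
  define q1 where "q1 = CARD('a) - 1"
  define T where "T = q1 ^ m"
  define N where "N = NL TYPE('a) m L"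
  have "T * T \<le> NL TYPE('a) (2 * m + 1) (L \<union> E1 m ` L)"
    unfolding NJ using M_ge[of N T q1] IH(5) unfolding N_def T_def q1_def by (simp add: mult_ac)
  then have le: "q1 * (T * T) \<le> q1 * NL TYPE('a) (2 * m + 1) (L \<union> E1 m ` L)" by (rule mult_le_mono2)
  have e: "q1 ^ (2 * m + 1) = q1 * (T * T)" unfolding T_def by (simp add: mult_2 power_add)
  have "q1 ^ (2 * m + 1) \<le> q1 * NL TYPE('a) (2 * m + 1) (L \<union> E1 m ` L)"
    unfolding e by (rule le)
  then show ?case unfolding Pk LL using c b IH(3,4) q1_def by auto
qed



lemma delta_step:
  fixes T N Q :: real
  assumes T: "T > 0" and Q: "Q > 1" and N: "0 \<le> N" "N \<le> T"
  shows "((Q - 1) * (T * T) - max (N * (T * (Q - 1))) (N * (N * (Q - 1)) + (T - N) * (T - N))) / ((Q - 1) * (T * T))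
     = min ((T - N) / T) (2 * ((T - N) / T) - ((T - N) / T)\<^sup>2 * Q / (Q - 1))"
proof -
  define D where "D = (Q - 1) * (T * T)"
  have D: "D > 0" unfolding D_def using T Q by simp
  define a where "a = N * (T * (Q - 1))"
  define b where "b = N * (N * (Q - 1)) + (T - N) * (T - N)"
  have 1: "(D - a) / D = (T - N) / T" unfolding D_def a_def using T Q
    by (simp add: field_simps)
  have 2: "(D - b) / D = 2 * ((T - N) / T) - ((T - N) / T)\<^sup>2 * Q / (Q - 1)" unfolding D_def b_def using T Q
    by (simp add: field_simps power2_eq_square)
  have "(D - max a b) / D = min ((D - a) / D) ((D - b) / D)"
  proof (cases "a \<le> b")
    case True
    then have "(D - b) / D \<le> (D - a) / D" using D by (intro divide_right_mono) auto
    then show ?thesis using True by (simp add: max_def min_def)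
  next
    case False
    then have "(D - a) / D \<le> (D - b) / D" using D by (intro divide_right_mono) auto
    then show ?thesis using False by (simp add: max_def min_def)
  qed
  then show ?thesis unfolding 1 2 unfolding D_def a_def b_def .
qed

lemma stable:
  fixes x y c :: real
  assumes c: "c > 0" and y: "y \<ge> 0" and x: "x = min y (2 * y - y\<^sup>2 * c)" and x0: "x \<ge> 0"
  shows "min x (2 * x - x\<^sup>2 * c) = x"
proof -
  have "c * (2 * y - y\<^sup>2 * c) = 1 - (1 - c * y)\<^sup>2" by (simp add: power2_eq_square algebra_simps)
  also have "\<dots> \<le> 1" by simp
  finally have "c * (2 * y - y\<^sup>2 * c) \<le> 1" .
  moreover have "x \<le> 2 * y - y\<^sup>2 * c" using x by simp
  ultimately have "c * x \<le> 1" using c by (meson mult_left_mono less_imp_le order_trans)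
  then have "x * (1 - c * x) \<ge> 0" using x0 by simp
  then have "2 * x - x\<^sup>2 * c \<ge> x" by (simp add: power2_eq_square algebra_simps)
  then show ?thesis by simp
qed

lemma delta_succ:
  assumes q3: "CARD('a::{finite,field}) \<ge> 3"
    and poly: "integral_polytope n P"
    and box: "in_box (CARD('a)) n P"
  shows "delta TYPE('a) (dimk n (Suc k)) (Pk n P (Suc k)) =
              min (delta TYPE('a) (dimk n k) (Pk n P k))
                  (2 * delta TYPE('a) (dimk n k) (Pk n P k)
                   - (delta TYPE('a) (dimk n k) (Pk n P k))\<^sup>2 * real (CARD('a)) / (real (CARD('a)) - 1))
     \<and> delta TYPE('a) (dimk n k) (Pk n P k) \<ge> 0"
proof -
  define m where "m = dimk n k"
  define Q where "Q = Pk n P k"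
  define L where "L = lattice_pts m Q"
  have IH: "conv Q \<subseteq> Q" "in_box (CARD('a)) m Q" "finite L" "L \<noteq> {}"
     "NL TYPE('a) m L = 0 \<or> (CARD('a) - 1) ^ m \<le> (CARD('a) - 1) * NL TYPE('a) m L"
    using invariant[OF q3 poly box, of k] unfolding m_def Q_def L_def by blast+
  have Lz: "\<forall>p\<in>L. \<forall>i\<ge>m. p i = 0" unfolding L_def lattice_pts_def by auto
  have Pk: "Pk n P (Suc k) = join m Q m Q" "dimk n (Suc k) = 2 * m + 1" unfolding m_def Q_def by simp_all
  have LL: "lattice_pts (2 * m + 1) (join m Q m Q) = L \<union> E1 m ` L"
    unfolding L_def by (rule lattice_join[OF IH(2,1)])
  note NJ = NL_join[OF Lz IH(3,4,5)]
  define q1 where "q1 = CARD('a) - 1"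
  define T where "T = q1 ^ m"
  define N where "N = NL TYPE('a) m L"
  have NT: "N \<le> T" unfolding N_def T_def q1_def by (rule NL_le[OF IH(4)])
  have cq: "CARD('a) \<ge> 1" using q3 by simp
  have rq: "real q1 = real CARD('a) - 1" unfolding q1_def using cq by (simp add: of_nat_diff)
  have rT: "real T = (real CARD('a) - 1) ^ m" unfolding T_def rq[symmetric] by simp
  have Tpos: "real T > 0" unfolding rT using q3 by simp
  have Qg: "real CARD('a) > 1" using q3 by simp
  have dk: "delta TYPE('a) (dimk n k) (Pk n P k) = (real T - real N) / real T"
    unfolding delta_def NP_NL m_def[symmetric] Q_def[symmetric] L_def[symmetric] N_def[symmetric] rT ..
  have NLs: "NL TYPE('a) (2 * m + 1) (L \<union> E1 m ` L) = max (N * (T * q1)) (N * (N * q1) + (T - N) * (T - N))"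
    unfolding NJ N_def T_def q1_def ..
  have rM: "real (max (N * (T * q1)) (N * (N * q1) + (T - N) * (T - N))) =
     max (real N * (real T * (real CARD('a) - 1))) (real N * (real N * (real CARD('a) - 1)) + (real T - real N) * (real T - real N))"
    using NT by (simp add: of_nat_diff of_nat_max rq[symmetric])
  have pw: "(real CARD('a) - 1) ^ (2 * m + 1) = (real CARD('a) - 1) * (real T * real T)"
    unfolding rT by (simp add: mult_2 power_add)
  have dk1: "delta TYPE('a) (dimk n (Suc k)) (Pk n P (Suc k)) =
     ((real CARD('a) - 1) * (real T * real T) - max (real N * (real T * (real CARD('a) - 1))) (real N * (real N * (real CARD('a) - 1)) + (real T - real N) * (real T - real N))) / ((real CARD('a) - 1) * (real T * real T))"
    unfolding delta_def NP_NL Pk LL NLs rM pw ..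
  have "delta TYPE('a) (dimk n (Suc k)) (Pk n P (Suc k)) =
     min ((real T - real N) / real T) (2 * ((real T - real N) / real T) - ((real T - real N) / real T)\<^sup>2 * real CARD('a) / (real CARD('a) - 1))"
    unfolding dk1 by (rule delta_step[OF Tpos Qg]) (use NT in auto)
  moreover have "(real T - real N) / real T \<ge> 0" using NT Tpos by simp
  ultimately show ?thesis unfolding dk by simp
qed

theorem mainTheorem10:
  fixes P :: "(nat \<Rightarrow> real) set" and n :: nat
  assumes q3: "CARD('a::{finite,field}) \<ge> 3"
    and poly: "integral_polytope n P"
    and box: "in_box (CARD('a)) n P"
    and contains: "contains_segment2 n P \<or> contains_unit_square n P"
  shows "(\<forall>k. delta TYPE('a) (dimk n (Suc k)) (Pk n P (Suc k)) =
              min (delta TYPE('a) (dimk n k) (Pk n P k))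
                  (2 * delta TYPE('a) (dimk n k) (Pk n P k)
                   - (delta TYPE('a) (dimk n k) (Pk n P k))\<^sup>2 * real (CARD('a)) / (real (CARD('a)) - 1)))
       \<and> (\<forall>k\<ge>2. delta TYPE('a) (dimk n k) (Pk n P k) = delta TYPE('a) (dimk n 2) (Pk n P 2))"
proof -
  define d where "d k = delta TYPE('a) (dimk n k) (Pk n P k)" for k
  define c where "c = real (CARD('a)) / (real (CARD('a)) - 1)"
  have c: "c > 0" unfolding c_def using q3 by simp
  have st: "d (Suc k) = min (d k) (2 * d k - (d k)\<^sup>2 * c)" "d k \<ge> 0" for k
    using delta_succ[OF q3 poly box, of k] unfolding d_def c_def by (simp_all add: mult.assoc)
  have stab: "d (Suc (Suc k)) = d (Suc k)" for k
    using stable[OF c st(2)[of k] st(1)[of k] st(2)[of "Suc k"]] st(1)[of "Suc k"] by simp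
  have all: "d (j + 2) = d 2" for j
  proof (induction j)
    case (Suc j)
    have "d (Suc j + 2) = d (Suc (Suc (Suc j)))" by simp
    also have "\<dots> = d (Suc (Suc j))" by (rule stab)
    also have "\<dots> = d (j + 2)" by simp
    finally show ?case using Suc by simp
  qed (simp add: numeral_2_eq_2)
  have part2: "\<forall>k\<ge>2. d k = d 2"
  proof (intro allI impI)
    fix k :: nat assume "k \<ge> 2"
    then have "k = (k - 2) + 2" by simp
    then show "d k = d 2" using all[of "k - 2"] by simp
  qed
  show ?thesis using delta_succ[OF q3 poly box] part2 unfolding d_def by blast
qed


end
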